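(* Let $A$ be a formula of $\mathbf{L_1}$. If some normal tableau for $A$ is closed, then no normal tableau for $A$ has a branch ending with a Hintikka formula; in particular every completed normal tableau for $A$ is closed.
   Context: Formulas of $\mathbf{L_1}$: built from atomic formulas $\epsilon ab$ ($a,b$ name variables, possibly equal) with connectives $\vee,\sim$. Disjunctions may be associated in any way. Positive/negative parts (occurrences): $A$ is a positive part of $A$; if $B\vee C$ is a positive part then $B,C$ are positive parts; if $\sim B$ is a positive part then $B$ is a negative part; if $\sim B$ is a negative part then $B$ is a positive part. $F[B_+]$ ($G[B_-]$) denotes a formula with a specified occurrence of $B$ as positive (negative) part; $F[B_+,C_-]$ etc. denote specified non-overlapping occurrences. Tableaux: reduction rules ($\vee_-$) $G[B\vee C_-]$ $\mapsto$ two branches $G[B\vee C_-]\vee\sim B$, $G[B\vee C_-]\vee\sim C$; ($\epsilon_1$) $G[\epsilon ab_-]\mapsto G[\epsilon ab_-]\vee\sim\epsilon aa$; ($\epsilon_2$) $G[\epsilon ab_-,\epsilon bc_-]\mapsto G[\epsilon ab_-,\epsilon bc_-]\vee\sim\epsilon ac$; ($\epsilon_{3b}$) $G[\epsilon ab_-,\epsilon bb_-]\mapsto G[\epsilon ab_-,\epsilon bb_-]\vee\sim\epsilon ba$. A tableau for $A$ is a finite tree with root $A$ whose non-leaf nodes have as children the result of applying one rule. A branch is closed if its last formula has the form $F[B_+,B_-]$; a tableau is closed if all branches are. A tableau is normal if each rule application is made only to a formula not of the form $F[B_+,B_-]$ and only when the formula appended after $\sim$ (i.e. $B$, $C$, $\epsilon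 aa$, $\epsilon ac$ or $\epsilon ba$ respectively) does not already occur as a negative part of the formula being reduced. A normal tableau is completed if no further normal rule application is possible at the end of any branch. Hintikka formula: a formula $H$ such that (1) $H$ is not of the form $F[B_+,B_-]$; (2) if $B\vee C$ is a negative part of $H$ then $B$ or $C$ is; (3) if $\epsilon ab$ is a negative part then so is $\epsilon aa$; (4) if $\epsilon ab,\epsilon bc$ are negative parts then so is $\epsilon ac$; (5) if $\epsilon ab,\epsilon bb$ are negative parts then so is $\epsilon ba$. *)

theory Defs
  imports Main
begin

datatype 'a fm = Eps 'a 'a | Or "'a fm" "'a fm" | Neg "'a fm"

text \<open>Occurrences: occ A p pol B means B occurs in A at position p (a path of
  child indices: 0/1 = left/right disjunct, 2 = under negation) as a positive
  part (pol = True) or a negative part (pol = False), exactly per the clauses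
  of the paper (negative disjunctions are not decomposed).\<close>
inductive occ :: "'a fm \<Rightarrow> nat list \<Rightarrow> bool \<Rightarrow> 'a fm \<Rightarrow> bool" for A where
  top: "occ A [] True A"
| disjL: "occ A p True (Or B C) \<Longrightarrow> occ A (p @ [0]) True B"
| disjR: "occ A p True (Or B C) \<Longrightarrow> occ A (p @ [1]) True C"
| negP: "occ A p True (Neg B) \<Longrightarrow> occ A (p @ [2]) False B"
| negN: "occ A p False (Neg B) \<Longrightarrow> occ A (p @ [2]) True B"

definition pos_part :: "'a fm \<Rightarrow> 'a fm \<Rightarrow> bool" where
  "pos_part A B \<longleftrightarrow> (\<exists>p. occ A p True B)"

definition neg_part :: "'a fm \<Rightarrow> 'a fm \<Rightarrow> bool" where
  "neg_part A B \<longleftrightarrow> (\<exists>p. occ A p False B)"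

definition nonoverlap :: "nat list \<Rightarrow> nat list \<Rightarrow> bool" where
  "nonoverlap p q \<longleftrightarrow> \<not> (\<exists>r. q = p @ r) \<and> \<not> (\<exists>r. p = q @ r)"

definition closed_fm :: "'a fm \<Rightarrow> bool" where
  "closed_fm F \<longleftrightarrow> (\<exists>B p q. occ F p True B \<and> occ F q False B \<and> nonoverlap p q)"

text \<open>rule G Xs: one reduction rule applies to G, producing one child
  G \<or> \<sim>X for each X in Xs (in order).\<close>
inductive rule :: "'a fm \<Rightarrow> 'a fm list \<Rightarrow> bool" where
  disj: "occ G p False (Or B C) \<Longrightarrow> rule G [B, C]"
| eps1: "occ G p False (Eps a b) \<Longrightarrow> rule G [Eps a a]"
| eps2: "occ G p False (Eps a b) \<Longrightarrow> occ G q False (Eps b c) \<Longrightarrow> nonoverlap p q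
         \<Longrightarrow> rule G [Eps a c]"
| eps3b: "occ G p False (Eps a b) \<Longrightarrow> occ G q False (Eps b b) \<Longrightarrow> nonoverlap p q
         \<Longrightarrow> rule G [Eps b a]"

definition normal_app :: "'a fm \<Rightarrow> 'a fm list \<Rightarrow> bool" where
  "normal_app G Xs \<longleftrightarrow> rule G Xs \<and> \<not> closed_fm G \<and> (\<forall>X\<in>set Xs. \<not> neg_part G X)"

datatype 'a tab = Nd "'a fm" "'a tab list"

fun root :: "'a tab \<Rightarrow> 'a fm" where
  "root (Nd G ts) = G"

fun is_tab :: "'a tab \<Rightarrow> bool" where
  "is_tab (Nd G ts) = (ts = [] \<or>
     ((\<exists>Xs. rule G Xs \<and> list_all2 (\<lambda>t X. root t = Or G (Neg X)) ts Xs)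
      \<and> (\<forall>t\<in>set ts. is_tab t)))"

fun is_normal_tab :: "'a tab \<Rightarrow> bool" where
  "is_normal_tab (Nd G ts) = (ts = [] \<or>
     ((\<exists>Xs. normal_app G Xs \<and> list_all2 (\<lambda>t X. root t = Or G (Neg X)) ts Xs)
      \<and> (\<forall>t\<in>set ts. is_normal_tab t)))"

fun leaves :: "'a tab \<Rightarrow> 'a fm set" where
  "leaves (Nd G ts) = (if ts = [] then {G} else \<Union> (leaves ` set ts))"

definition tableau_for :: "'a fm \<Rightarrow> 'a tab \<Rightarrow> bool" where
  "tableau_for A T \<longleftrightarrow> root T = A \<and> is_tab T"

definition normal_tableau_for :: "'a fm \<Rightarrow> 'a tab \<Rightarrow> bool" where
  "normal_tableau_for A T \<longleftrightarrow> tableau_for A T \<and> is_normal_tab T"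

definition closed_tab :: "'a tab \<Rightarrow> bool" where
  "closed_tab T \<longleftrightarrow> (\<forall>L\<in>leaves T. closed_fm L)"

definition completed :: "'a tab \<Rightarrow> bool" where
  "completed T \<longleftrightarrow> is_normal_tab T \<and> (\<forall>L\<in>leaves T. \<not> (\<exists>Xs. normal_app L Xs))"

definition hintikka :: "'a fm \<Rightarrow> bool" where
  "hintikka H \<longleftrightarrow>
     \<not> closed_fm H
   \<and> (\<forall>B C. neg_part H (Or B C) \<longrightarrow> neg_part H B \<or> neg_part H C)
   \<and> (\<forall>a b. neg_part H (Eps a b) \<longrightarrow> neg_part H (Eps a a))
   \<and> (\<forall>a b c. neg_part H (Eps a b) \<and> neg_part H (Eps b c) \<longrightarrow> neg_part H (Eps a c))
   \<and> (\<forall>a b. neg_part H (Eps a b) \<and> neg_part H (Eps b b) \<longrightarrow> neg_part H (Eps b a))"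

end

theory Submission
  imports Defs
begin

fun val :: "('a \<Rightarrow> 'a \<Rightarrow> bool) \<Rightarrow> 'a fm \<Rightarrow> bool" where
  "val v (Eps a b) = v a b"
| "val v (Or B C) = (val v B \<or> val v C)"
| "val v (Neg B) = (\<not> val v B)"

definition adm :: "('a \<Rightarrow> 'a \<Rightarrow> bool) \<Rightarrow> bool" where
  "adm v \<longleftrightarrow> (\<forall>a b. v a b \<longrightarrow> v a a) \<and> (\<forall>a b c. v a b \<and> v b c \<longrightarrow> v a c)
     \<and> (\<forall>a b. v a b \<and> v b b \<longrightarrow> v b a)"

lemma occ_false: "occ A p pol B \<Longrightarrow> \<not> val v A \<Longrightarrow> val v B = (\<not> pol)"
  by (induction rule: occ.induct) auto

lemma occ_nil: "occ A [] pol B \<Longrightarrow> pol \<and> B = A"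
  by (erule occ.cases) auto
lemma occ_snoc: "occ A (p@[x]) pol B \<Longrightarrow>
  (x=0 \<and> pol \<and> (\<exists>C. occ A p True (Or B C))) \<or> (x=1 \<and> pol \<and> (\<exists>C. occ A p True (Or C B)))
  \<or> (x = 2 \<and> occ A p (\<not>pol) (Neg B))"
  by (erule occ.cases) auto
lemma occ_det: "occ A p pol B \<Longrightarrow> occ A p pol' B' \<Longrightarrow> pol = pol' \<and> B = B'"
proof (induction p arbitrary: pol B pol' B' rule: rev_induct)
  case Nil
  then show ?case using occ_nil by blast
next
  case (snoc x p)
  from occ_snoc[OF snoc.prems(1)] occ_snoc[OF snoc.prems(2)] snoc.IH show ?case
    by (elim disjE conjE exE; (drule (1) snoc.IH)?; auto)
qed
lemma occ_prefix: "occ A (p @ r) pol B \<Longrightarrow> r \<noteq> [] \<Longrightarrow>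
   \<exists>pol' B'. occ A p pol' B' \<and> (\<forall>a b. B' \<noteq> Eps a b)"
proof (induction r arbitrary: pol B rule: rev_induct)
  case Nil
  then show ?case by simp
next
  case (snoc x r)
  from occ_snoc[of A "p @ r" x pol B] snoc.prems
  obtain pol2 B2 where o: "occ A (p @ r) pol2 B2" "\<forall>a b. B2 \<noteq> Eps a b" by auto
  show ?case
  proof (cases "r = []")
    case True then show ?thesis using o by auto
  next
    case False then show ?thesis using snoc.IH o by blast
  qed
qed

lemma eps_overlap:
  assumes "occ H p pol (Eps a b)" "occ H q pol' (Eps c d)"
  shows "(pol = pol' \<and> a = c \<and> b = d) \<or> nonoverlap p q"
proof (cases "p = q")
  case True
  then show ?thesis using occ_det[OF assms(1)] assms(2) by auto
next
  case False
  have "\<not> (\<exists>r. q = p @ r)"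
  proof
    assume "\<exists>r. q = p @ r"
    then obtain r where r: "q = p @ r" by blast
    with False have "r \<noteq> []" by auto
    from occ_prefix[OF assms(2)[unfolded r] this] obtain pol2 B2 where
      "occ H p pol2 B2" "\<forall>a b. B2 \<noteq> Eps a b" by blast
    with occ_det[OF assms(1)] show False by blast
  qed
  moreover have "\<not> (\<exists>r. p = q @ r)"
  proof
    assume "\<exists>r. p = q @ r"
    then obtain r where r: "p = q @ r" by blast
    with False have "r \<noteq> []" by auto
    from occ_prefix[OF assms(1)[unfolded r] this] obtain pol2 B2 where
      "occ H q pol2 B2" "\<forall>a b. B2 \<noteq> Eps a b" by blast
    with occ_det[OF assms(2)] show False by blast
  qed
  ultimately show ?thesis by (simp add: nonoverlap_def)
qed

lemma hintikka_val:
  assumes h: "hintikka H"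
  shows "(pos_part H X \<longrightarrow> \<not> val (\<lambda>a b. neg_part H (Eps a b)) X)
       \<and> (neg_part H X \<longrightarrow> val (\<lambda>a b. neg_part H (Eps a b)) X)"
proof (induction X)
  case (Eps a b)
  have "\<not> (pos_part H (Eps a b) \<and> neg_part H (Eps a b))"
  proof
    assume "pos_part H (Eps a b) \<and> neg_part H (Eps a b)"
    then obtain p q where p: "occ H p True (Eps a b)" and q: "occ H q False (Eps a b)"
      unfolding pos_part_def neg_part_def by blast
    from eps_overlap[OF p q] have "nonoverlap p q" by simp
    with p q h show False unfolding hintikka_def closed_fm_def by blast
  qed
  then show ?case by auto
next
  case (Or B C)
  have "pos_part H (Or B C) \<Longrightarrow> pos_part H B \<and> pos_part H C"
    unfolding pos_part_def using occ.disjL occ.disjR by blast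
  moreover have "neg_part H (Or B C) \<Longrightarrow> neg_part H B \<or> neg_part H C"
    using h unfolding hintikka_def by blast
  ultimately show ?case using Or by auto
next
  case (Neg B)
  have "pos_part H (Neg B) \<Longrightarrow> neg_part H B"
    unfolding pos_part_def neg_part_def using occ.negP by blast
  moreover have "neg_part H (Neg B) \<Longrightarrow> pos_part H B"
    unfolding pos_part_def neg_part_def using occ.negN by blast
  ultimately show ?case using Neg by auto
qed

lemma hintikka_adm: "hintikka H \<Longrightarrow> adm (\<lambda>a b. neg_part H (Eps a b))"
  unfolding hintikka_def adm_def by blast

lemma hintikka_false: "hintikka H \<Longrightarrow> \<not> val (\<lambda>a b. neg_part H (Eps a b)) H"
  using hintikka_val[of H H] occ.top[of H] unfolding pos_part_def by blast

lemma closed_val: "closed_fm F \<Longrightarrow> val v F"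
proof (rule ccontr)
  assume "closed_fm F" "\<not> val v F"
  then obtain B p q where "occ F p True B" "occ F q False B"
    unfolding closed_fm_def by blast
  with occ_false[OF this(1) \<open>\<not> val v F\<close>] occ_false[OF this(2) \<open>\<not> val v F\<close>]
  show False by simp
qed

lemma la2_set: "list_all2 P ts Xs \<Longrightarrow> X \<in> set Xs \<Longrightarrow> \<exists>t\<in>set ts. P t X"
proof -
  assume a: "list_all2 P ts Xs" "X \<in> set Xs"
  then obtain i where "i < length Xs" "Xs ! i = X" by (auto simp: in_set_conv_nth)
  with a(1) show ?thesis unfolding list_all2_conv_all_nth by (metis nth_mem)
qed

lemma la2_set1: "list_all2 P ts Xs \<Longrightarrow> t \<in> set ts \<Longrightarrow> \<exists>X\<in>set Xs. P t X"
proof -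
  assume a: "list_all2 P ts Xs" "t \<in> set ts"
  then obtain i where "i < length ts" "ts ! i = t" by (auto simp: in_set_conv_nth)
  with a(1) show ?thesis unfolding list_all2_conv_all_nth by (metis nth_mem)
qed

lemma rule_sound: "rule G Xs \<Longrightarrow> adm v \<Longrightarrow> \<not> val v G \<Longrightarrow> \<exists>X\<in>set Xs. val v X"
proof (induction rule: rule.induct)
  case (disj G p B C)
  have "val v (Or B C)" using occ_false[OF disj(1) disj(3)] by simp
  then show ?case by simp
next
  case (eps1 G p a b)
  have "v a b" using occ_false[OF eps1(1) eps1(3)] by simp
  then have "v a a" using eps1(2) unfolding adm_def by blast
  then show ?case by simp
next
  case (eps2 G p a b q c)
  have "v a b" "v b c" using occ_false[OF eps2(1) eps2(5)] occ_false[OF eps2(2) eps2(5)] by simp_all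
  then have "v a c" using eps2(4) unfolding adm_def by blast
  then show ?case by simp
next
  case (eps3b G p a b q)
  have "v a b" "v b b" using occ_false[OF eps3b(1) eps3b(5)] occ_false[OF eps3b(2) eps3b(5)] by simp_all
  then have "v b a" using eps3b(4) unfolding adm_def by blast
  then show ?case by simp
qed

lemma tab_sound: "is_tab T \<Longrightarrow> (\<forall>L\<in>leaves T. closed_fm L) \<Longrightarrow> adm v \<Longrightarrow> val v (root T)"
proof (induction T)
  case (Nd G ts)
  show ?case
  proof (cases "ts = []")
    case True
    then show ?thesis using Nd.prems closed_val by auto
  next
    case False
    with Nd.prems obtain Xs where r: "rule G Xs"
      and la: "list_all2 (\<lambda>t X. root t = Or G (Neg X)) ts Xs"
      and all: "\<forall>t\<in>set ts. is_tab t" by auto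
    have ch: "\<forall>t\<in>set ts. val v (root t)"
      using Nd.IH all Nd.prems False by auto
    show ?thesis
    proof (rule ccontr)
      assume "\<not> val v (root (Nd G ts))"
      then have "\<not> val v G" by simp
      from rule_sound[OF r Nd.prems(3) this] obtain X where "X \<in> set Xs" "val v X" by blast
      from la2_set[OF la this(1)] obtain t where "t \<in> set ts" "root t = Or G (Neg X)" by blast
      with ch \<open>\<not> val v G\<close> \<open>val v X\<close> show False by auto
    qed
  qed
qed

lemma leaf_false: "is_tab T \<Longrightarrow> L \<in> leaves T \<Longrightarrow> \<not> val v L \<Longrightarrow> \<not> val v (root T)"
proof (induction T)
  case (Nd G ts)
  show ?case
  proof (cases "ts = []")
    case True
    then show ?thesis using Nd.prems by auto
  next
    case False
    with Nd.prems obtain Xs where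
      la: "list_all2 (\<lambda>t X. root t = Or G (Neg X)) ts Xs"
      and all: "\<forall>t\<in>set ts. is_tab t" by auto
    from False Nd.prems obtain t where t: "t \<in> set ts" "L \<in> leaves t" by auto
    with Nd.IH all Nd.prems have "\<not> val v (root t)" by auto
    moreover from la2_set1[OF la t(1)] obtain X where "root t = Or G (Neg X)" by blast
    ultimately show ?thesis by simp
  qed
qed

lemma completed_leaf:
  assumes nc: "\<not> closed_fm L" and nn: "\<not> (\<exists>Xs. normal_app L Xs)"
  shows "hintikka L"
proof -
  have na: "rule L Xs \<Longrightarrow> \<exists>X\<in>set Xs. neg_part L X" for Xs
    using nn nc unfolding normal_app_def by blast
  have 2: "\<forall>B C. neg_part L (Or B C) \<longrightarrow> neg_part L B \<or> neg_part L C"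
    using na rule.disj unfolding neg_part_def by fastforce
  have 3: "\<forall>a b. neg_part L (Eps a b) \<longrightarrow> neg_part L (Eps a a)"
    using na rule.eps1 unfolding neg_part_def by fastforce
  have 4: "neg_part L (Eps a c)" if "neg_part L (Eps a b)" "neg_part L (Eps b c)" for a b c
  proof -
    from that obtain p q where p: "occ L p False (Eps a b)" and q: "occ L q False (Eps b c)"
      unfolding neg_part_def by blast
    from eps_overlap[OF p q] show ?thesis
    proof
      assume "False = False \<and> a = b \<and> b = c"
      then show ?thesis using that by simp
    next
      assume "nonoverlap p q"
      from na[OF rule.eps2[OF p q this]] show ?thesis by simp
    qed
  qed
  have 5: "neg_part L (Eps b a)" if "neg_part L (Eps a b)" "neg_part L (Eps b b)" for a b
  proof -
    from that obtain p q where p: "occ L p False (Eps a b)" and q: "occ L q False (Eps b b)"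
      unfolding neg_part_def by blast
    from eps_overlap[OF p q] show ?thesis
    proof
      assume "False = False \<and> a = b \<and> b = b"
      then show ?thesis using that by simp
    next
      assume "nonoverlap p q"
      from na[OF rule.eps3b[OF p q this]] show ?thesis by simp
    qed
  qed
  show ?thesis unfolding hintikka_def using nc 2 3 4 5 by blast
qed

lemma normal_is_tab: "is_normal_tab T \<Longrightarrow> is_tab T"
  by (induction T rule: is_normal_tab.induct) (auto simp: normal_app_def)

theorem theorem6p6:
  fixes A :: "'a fm"
  assumes "\<exists>T. normal_tableau_for A T \<and> closed_tab T"
  shows "(\<forall>T. normal_tableau_for A T \<longrightarrow> (\<forall>L\<in>leaves T. \<not> hintikka L))
       \<and> (\<forall>T. normal_tableau_for A T \<and> completed T \<longrightarrow> closed_tab T)"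
proof -
  from assms obtain T0 where T0: "normal_tableau_for A T0" "closed_tab T0" by blast
  have valid: "adm v \<Longrightarrow> val v A" for v
    using tab_sound[of T0 v] T0 unfolding normal_tableau_for_def tableau_for_def closed_tab_def
    by auto
  have P1: "\<forall>T. normal_tableau_for A T \<longrightarrow> (\<forall>L\<in>leaves T. \<not> hintikka L)"
  proof (intro allI impI ballI notI)
    fix T L assume T: "normal_tableau_for A T" and L: "L \<in> leaves T" and h: "hintikka L"
    let ?v = "\<lambda>a b. neg_part L (Eps a b)"
    from leaf_false[of T L ?v] T L hintikka_false[OF h]
    have "\<not> val ?v A" unfolding normal_tableau_for_def tableau_for_def by auto
    with valid hintikka_adm[OF h] show False by blast
  qed
  moreover have "\<forall>T. normal_tableau_for A T \<and> completed T \<longrightarrow> closed_tab T"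
  proof (intro allI impI)
    fix T assume T: "normal_tableau_for A T \<and> completed T"
    show "closed_tab T" unfolding closed_tab_def
    proof (rule ballI, rule ccontr)
      fix L assume L: "L \<in> leaves T" "\<not> closed_fm L"
      with T have "hintikka L" using completed_leaf unfolding completed_def by blast
      with P1 T L show False by blast
    qed
  qed
  ultimately show ?thesis by blast
qed

end
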